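(* Let $K_n$ be the complete graph on $n$ vertices and let $S\subseteq V(K_n)$ with $|S|=s\geq 2$. Then $K_n$ contains $n-\lceil s/2\rceil$ pairwise completely independent $S$-Steiner trees.
   Context: For $S\subseteq V(G)$ with $|S|\ge 2$, an $S$-Steiner tree of $G$ is a subtree $T$ of $G$ with $S\subseteq V(T)$ all of whose leaves belong to $S$. A family of $S$-Steiner trees $T_1,\dots,T_k$ is completely independent if for all $1\le p<q\le k$: $E(T_p)\cap E(T_q)=\emptyset$, $V(T_p)\cap V(T_q)=S$, and for any two vertices $x_1,x_2\in S$ the $(x_1,x_2)$-paths in $T_p$ and in $T_q$ are internally disjoint. *)

theory Defs
  imports Complex_Main
begin

text \<open>Simple graphs: a vertex set V and an edge set E of 2-element subsets of V.
  A subgraph/tree is given by a pair (vertex set, edge set).\<close>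

definition complete_graph_edges :: "'a set \<Rightarrow> 'a set set" where
  "complete_graph_edges V = {{u, v} | u v. u \<in> V \<and> v \<in> V \<and> u \<noteq> v}"

definition is_path :: "'a set set \<Rightarrow> 'a list \<Rightarrow> 'a \<Rightarrow> 'a \<Rightarrow> bool" where
  "is_path E xs u v \<longleftrightarrow> xs \<noteq> [] \<and> hd xs = u \<and> last xs = v \<and> distinct xs \<and>
     (\<forall>i. Suc i < length xs \<longrightarrow> {xs ! i, xs ! Suc i} \<in> E)"

definition internal_vertices :: "'a list \<Rightarrow> 'a set" where
  "internal_vertices xs = set (butlast (tl xs))"

definition is_connected :: "'a set \<Rightarrow> 'a set set \<Rightarrow> bool" where
  "is_connected V E \<longleftrightarrow> (\<forall>u\<in>V. \<forall>v\<in>V. \<exists>xs. is_path E xs u v \<and> set xs \<subseteq> V)"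

definition is_acyclic :: "'a set set \<Rightarrow> bool" where
  "is_acyclic E \<longleftrightarrow> \<not> (\<exists>xs. length xs \<ge> 3 \<and> is_path E xs (hd xs) (last xs) \<and>
                               {last xs, hd xs} \<in> E)"

definition is_subtree :: "'a set \<Rightarrow> 'a set set \<Rightarrow> 'a set \<Rightarrow> 'a set set \<Rightarrow> bool" where
  "is_subtree V E VT ET \<longleftrightarrow> VT \<subseteq> V \<and> ET \<subseteq> E \<and> (\<forall>e\<in>ET. e \<subseteq> VT) \<and>
     VT \<noteq> {} \<and> finite VT \<and> is_connected VT ET \<and> is_acyclic ET"

definition degree :: "'a set set \<Rightarrow> 'a \<Rightarrow> nat" where
  "degree E v = card {e \<in> E. v \<in> e}"

definition leaves :: "'a set \<Rightarrow> 'a set set \<Rightarrow> 'a set" where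
  "leaves VT ET = {v \<in> VT. degree ET v = 1}"

definition steiner_tree :: "'a set \<Rightarrow> 'a set set \<Rightarrow> 'a set \<Rightarrow> 'a set \<times> 'a set set \<Rightarrow> bool" where
  "steiner_tree V E S T \<longleftrightarrow> is_subtree V E (fst T) (snd T) \<and> S \<subseteq> fst T \<and>
     leaves (fst T) (snd T) \<subseteq> S"

definition completely_independent ::
  "'a set \<Rightarrow> 'a set set \<Rightarrow> 'a set \<Rightarrow> nat \<Rightarrow> (nat \<Rightarrow> 'a set \<times> 'a set set) \<Rightarrow> bool" where
  "completely_independent V E S k T \<longleftrightarrow>
     (\<forall>i<k. steiner_tree V E S (T i)) \<and>
     (\<forall>p q. p < q \<and> q < k \<longrightarrow>
        snd (T p) \<inter> snd (T q) = {} \<and>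
        fst (T p) \<inter> fst (T q) = S \<and>
        (\<forall>x1\<in>S. \<forall>x2\<in>S. \<forall>P Q. is_path (snd (T p)) P x1 x2 \<and> set P \<subseteq> fst (T p) \<and>
                               is_path (snd (T q)) Q x1 x2 \<and> set Q \<subseteq> fst (T q) \<longrightarrow>
                               internal_vertices P \<inter> internal_vertices Q = {}))"

end

theory Submission
  imports Defs
begin


definition hubs :: "'a set set \<Rightarrow> 'a set" where
  "hubs E = {v. \<exists>x y. x \<noteq> y \<and> {x,v} \<in> E \<and> {v,y} \<in> E}"

lemma path_internal_hub:
  assumes "is_path E xs u v" "0 < j" "Suc j < length xs"
  shows "xs ! j \<in> hubs E"
proof -
  have d: "distinct xs" and e: "\<And>i. Suc i < length xs \<Longrightarrow> {xs ! i, xs ! Suc i} \<in> E"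
    using assms(1) unfolding is_path_def by auto
  have "xs ! (j - 1) \<noteq> xs ! Suc j" using d assms(2,3) by (simp add: nth_eq_iff_index_eq)
  moreover have "{xs ! (j-1), xs ! j} \<in> E" using e[of "j-1"] assms(2,3) by simp
  moreover have "{xs ! j, xs ! Suc j} \<in> E" using e[of j] assms(3) by simp
  ultimately show ?thesis unfolding hubs_def by blast
qed

lemma internal_sub_hubs:
  assumes "is_path E xs u v"
  shows "internal_vertices xs \<subseteq> hubs E"
proof
  fix w assume "w \<in> internal_vertices xs"
  then obtain j where j: "j < length (butlast (tl xs))" "w = butlast (tl xs) ! j"
    unfolding internal_vertices_def by (auto simp: in_set_conv_nth)
  then have "w = xs ! Suc j" "Suc (Suc j) < length xs"
    by (auto simp: nth_butlast nth_tl)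
  then show "w \<in> hubs E" using path_internal_hub[OF assms, of "Suc j"] by simp
qed

lemma acyclic_if_hubs:
  assumes "hubs E \<subseteq> {a,b}"
  shows "is_acyclic E"
  unfolding is_acyclic_def
proof
  assume "\<exists>xs. 3 \<le> length xs \<and> is_path E xs (hd xs) (last xs) \<and> {last xs, hd xs} \<in> E"
  then obtain xs where L: "3 \<le> length xs" and p: "is_path E xs (hd xs) (last xs)"
    and c: "{last xs, hd xs} \<in> E" by blast
  have d: "distinct xs" and e: "\<And>i. Suc i < length xs \<Longrightarrow> {xs ! i, xs ! Suc i} \<in> E"
    using p unfolding is_path_def by auto
  have hd: "hd xs = xs ! 0" using L by (cases xs) auto
  have lst: "last xs = xs ! (length xs - 1)" using L by (cases xs rule: rev_cases) (auto simp: nth_append)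
  have "set xs \<subseteq> hubs E"
  proof
    fix w assume "w \<in> set xs"
    then obtain j where j: "j < length xs" "w = xs ! j" by (auto simp: in_set_conv_nth)
    consider "j = 0" | "j = length xs - 1" | "0 < j \<and> Suc j < length xs" using j L by linarith
    then show "w \<in> hubs E"
    proof cases
      case 1
      have "xs ! (length xs - 1) \<noteq> xs ! 1" using d L by (simp add: nth_eq_iff_index_eq)
      moreover have "{xs ! 0, xs ! 1} \<in> E" using e[of 0] L by simp
      ultimately show ?thesis using c 1 j hd lst unfolding hubs_def by auto
    next
      case 2
      have "xs ! (length xs - 2) \<noteq> xs ! 0" using d L by (subst nth_eq_iff_index_eq) auto
      moreover have "{xs ! (length xs - 2), xs ! (length xs - 1)} \<in> E" using e[of "length xs - 2"] L
        by (simp add: Suc_diff_Suc numeral_2_eq_2)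
      moreover have "{xs ! (length xs - 1), xs ! 0} \<in> E" using c hd lst by simp
      ultimately have "\<exists>x y. x \<noteq> y \<and> {x, xs ! (length xs - 1)} \<in> E \<and> {xs ! (length xs - 1), y} \<in> E"
        by blast
      then show ?thesis using 2 j unfolding hubs_def by simp
    next
      case 3 then show ?thesis using path_internal_hub[OF p, of j] j by simp
    qed
  qed
  then have "card (set xs) \<le> card {a,b}" using assms by (meson card_mono finite.emptyI finite.insertI order_trans)
  also have "\<dots> \<le> 2" by (simp add: card_insert_if)
  finally show False using d L by (simp add: distinct_card)
qed

lemma walk_path:
  assumes "(u,v) \<in> {(x,y). {x,y} \<in> E}\<^sup>*" "u \<in> V" "\<forall>e\<in>E. e \<subseteq> V"
  shows "\<exists>xs. is_path E xs u v \<and> set xs \<subseteq> V"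
  using assms(1)
proof (induction rule: rtrancl_induct)
  case base
  then show ?case using assms(2) by (intro exI[of _ "[u]"]) (auto simp: is_path_def)
next
  case (step y z)
  then obtain xs where p: "is_path E xs u y" and sv: "set xs \<subseteq> V" by blast
  have ne: "xs \<noteq> []" and h: "hd xs = u" and l: "last xs = y" and d: "distinct xs"
    and e: "\<And>i. Suc i < length xs \<Longrightarrow> {xs ! i, xs ! Suc i} \<in> E"
    using p unfolding is_path_def by auto
  have yz: "{y,z} \<in> E" using step by simp
  show ?case
  proof (cases "z \<in> set xs")
    case True
    then obtain k where k: "k < length xs" "xs ! k = z" by (auto simp: in_set_conv_nth)
    let ?ys = "take (Suc k) xs"
    have "is_path E ?ys u z"
      unfolding is_path_def using ne h k d e
      by (auto simp: last_conv_nth hd_take)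
    moreover have "set ?ys \<subseteq> V" using sv by (meson order_trans set_take_subset)
    ultimately show ?thesis by blast
  next
    case False
    let ?ys = "xs @ [z]"
    have "z \<in> V" using yz assms(3) by blast
    have "is_path E ?ys u z"
      unfolding is_path_def
    proof (intro conjI allI impI)
      fix i assume i: "Suc i < length ?ys"
      show "{?ys ! i, ?ys ! Suc i} \<in> E"
      proof (cases "Suc i < length xs")
        case True then show ?thesis using e[of i] by (simp add: nth_append)
      next
        case False
        then have "i = length xs - 1" using i by simp
        then show ?thesis using yz l ne False i by (simp add: nth_append last_conv_nth)
      qed
    qed (use ne h d False in auto)
    moreover have "set (xs @ [z]) \<subseteq> V" using sv \<open>z \<in> V\<close> by auto
    ultimately show ?thesis by blast
  qed
qed

lemma connected_via_root:
  assumes "r \<in> V" "\<forall>x\<in>V. (r,x) \<in> {(x,y). {x,y} \<in> E}\<^sup>*" "\<forall>e\<in>E. e \<subseteq> V"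
  shows "is_connected V E"
  unfolding is_connected_def
proof (intro ballI)
  fix u v assume u: "u \<in> V" and v: "v \<in> V"
  let ?R = "{(x,y). {x,y} \<in> E}"
  have sym: "?R\<inverse> = ?R" by (auto simp: insert_commute)
  have "(r,u) \<in> ?R\<^sup>*" using assms u by blast
  then have "(u,r) \<in> (?R\<inverse>)\<^sup>*" by (simp add: rtrancl_converse)
  then have "(u,r) \<in> ?R\<^sup>*" using sym by simp
  moreover have "(r,v) \<in> ?R\<^sup>*" using assms v by blast
  ultimately have "(u,v) \<in> ?R\<^sup>*" by simp
  then show "\<exists>xs. is_path E xs u v \<and> set xs \<subseteq> V" using walk_path[OF _ u assms(3)] by simp
qed

lemma double_star:
  assumes "a \<noteq> b" "a \<notin> A" "a \<notin> B" "b \<notin> A" "b \<notin> B" "A \<inter> B = {}"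
    and ET: "ET = insert {a,b} ((\<lambda>x. {a,x}) ` A \<union> (\<lambda>x. {b,x}) ` B)"
    and VT: "VT = {a,b} \<union> A \<union> B"
  shows "is_connected VT ET" "hubs ET \<subseteq> {a,b}" "B = {} \<Longrightarrow> hubs ET \<subseteq> {a}"
    "is_acyclic ET" "ET \<subseteq> complete_graph_edges VT" "\<forall>e\<in>ET. e \<subseteq> VT"
proof -
  show "ET \<subseteq> complete_graph_edges VT" using assms unfolding complete_graph_edges_def by blast
  show "\<forall>e\<in>ET. e \<subseteq> VT" using ET VT by auto
  let ?R = "{(x,y). {x,y} \<in> ET}"
  have ab: "(a,b) \<in> ?R" using ET by simp
  have "\<forall>x\<in>VT. (a,x) \<in> ?R\<^sup>*"
  proof
    fix x assume "x \<in> VT"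
    then consider "x = a" | "x = b" | "x \<in> A" | "x \<in> B" using VT by blast
    then show "(a,x) \<in> ?R\<^sup>*"
    proof cases
      case 3 then have "(a,x) \<in> ?R" using ET by auto
      then show ?thesis by blast
    next
      case 4 then have "(b,x) \<in> ?R" using ET by auto
      then show ?thesis using ab by (meson converse_rtrancl_into_rtrancl r_into_rtrancl)
    qed (use ab in auto)
  qed
  moreover have "\<forall>e\<in>ET. e \<subseteq> VT" using ET VT by auto
  ultimately show "is_connected VT ET" using connected_via_root[of a VT] VT by blast
  show H: "hubs ET \<subseteq> {a,b}"
  proof
    fix v assume "v \<in> hubs ET"
    then obtain x y where xy: "x \<noteq> y" "{x,v} \<in> ET" "{v,y} \<in> ET" unfolding hubs_def by blast
    show "v \<in> {a,b}"
    proof (rule ccontr)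
      assume nv: "v \<notin> {a,b}"
      have "(v \<in> A \<and> x = a) \<or> (v \<in> B \<and> x = b)" using xy(2) ET nv by (auto simp: doubleton_eq_iff)
      moreover have "(v \<in> A \<and> y = a) \<or> (v \<in> B \<and> y = b)" using xy(3) ET nv by (auto simp: doubleton_eq_iff)
      ultimately show False using xy(1) assms(6) by blast
    qed
  qed
  show "B = {} \<Longrightarrow> hubs ET \<subseteq> {a}"
  proof
    fix v assume B: "B = {}" and "v \<in> hubs ET"
    then obtain x y where xy: "x \<noteq> y" "{x,v} \<in> ET" "{v,y} \<in> ET" unfolding hubs_def by blast
    have "v \<in> {a,b}" using H \<open>v \<in> hubs ET\<close> by blast
    show "v \<in> {a}"
    proof (rule ccontr)
      assume "v \<notin> {a}"
      then have "v = b" using \<open>v \<in> {a,b}\<close> by blast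
      have "x = a" using xy(2) ET B assms(1,4) \<open>v = b\<close> by (auto simp: doubleton_eq_iff)
      moreover have "y = a" using xy(3) ET B assms(1,4) \<open>v = b\<close> by (auto simp: doubleton_eq_iff)
      ultimately show False using xy(1) by simp
    qed
  qed
  show "is_acyclic ET" using acyclic_if_hubs[OF H] .
qed



lemma cge_mono: "A \<subseteq> B \<Longrightarrow> complete_graph_edges A \<subseteq> complete_graph_edges B"
  unfolding complete_graph_edges_def by blast

lemma ceil_half: "nat \<lceil>real s / 2\<rceil> = s - s div 2"
proof (cases "even s")
  case True
  then obtain m where "s = 2*m" by blast
  then show ?thesis by simp
next
  case False
  then obtain m where s: "s = 2*m+1" using oddE by blast
  have "\<lceil>real s / 2\<rceil> = int m + 1"
    by (rule ceiling_unique) (simp_all add: s)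
  then show ?thesis using s by simp
qed

lemma memA: "(y::nat) \<in> {i<..<m} \<union> (\<lambda>j. m+j) ` {..<i} \<union> (if odd s then {2*m} else {}) \<longleftrightarrow>
   (i<y \<and> y<m) \<or> (m \<le> y \<and> y < m+i) \<or> (odd s \<and> y = 2*m)"
proof -
  have "y \<in> (\<lambda>j. m+j) ` {..<i} \<longleftrightarrow> m \<le> y \<and> y < m+i"
  proof
    assume "m \<le> y \<and> y < m + i"
    then have "y = m + (y - m)" "y - m < i" by auto
    then show "y \<in> (\<lambda>j. m+j) ` {..<i}" by blast
  qed auto
  then show ?thesis by (cases "odd s") auto
qed

lemma memB: "(y::nat) \<in> (\<lambda>j. m+j) ` {i<..<m} \<union> {..<i} \<longleftrightarrow> (m+i < y \<and> y < 2*m) \<or> y < i"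
proof -
  have "y \<in> (\<lambda>j. m+j) ` {i<..<m} \<longleftrightarrow> m+i < y \<and> y < 2*m"
  proof
    assume "m+i < y \<and> y < 2*m"
    then have "y = m + (y - m)" "y - m \<in> {i<..<m}" by auto
    then show "y \<in> (\<lambda>j. m+j) ` {i<..<m}" by blast
  qed auto
  then show ?thesis by auto
qed

definition Rrel :: "nat \<Rightarrow> nat \<Rightarrow> nat \<Rightarrow> nat \<Rightarrow> nat \<Rightarrow> bool" where
  "Rrel m s i x y \<longleftrightarrow> (x = i \<and> y = m+i) \<or> (x = i \<and> ((i<y \<and> y<m) \<or> (m \<le> y \<and> y < m+i) \<or> (odd s \<and> y = 2*m)))
        \<or> (x = m+i \<and> ((m+i < y \<and> y < 2*m) \<or> y < i))"

lemma Rdisj: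
  fixes p q m s :: nat
  assumes pq: "p < q" "q < m"
  shows "Rrel m s p x y \<Longrightarrow> Rrel m s q x y \<Longrightarrow> False" "Rrel m s p x y \<Longrightarrow> Rrel m s q y x \<Longrightarrow> False"
  using pq unfolding Rrel_def by auto

definition IAf :: "nat \<Rightarrow> nat \<Rightarrow> nat \<Rightarrow> nat set" where
  "IAf m s i = {i<..<m} \<union> (\<lambda>j. m+j) ` {..<i} \<union> (if odd s then {2*m} else {})"
definition IBf :: "nat \<Rightarrow> nat \<Rightarrow> nat set" where
  "IBf m i = (\<lambda>j. m+j) ` {i<..<m} \<union> {..<i}"
definition DSIf :: "nat \<Rightarrow> nat \<Rightarrow> nat \<Rightarrow> nat set set" where
  "DSIf m s i = insert {i, m+i} ((\<lambda>x. {i,x}) ` IAf m s i \<union> (\<lambda>x. {m+i,x}) ` IBf m i)"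

lemma DSI_mem:
  assumes e: "e \<in> DSIf m s i"
  shows "\<exists>x y. e = {x,y} \<and> Rrel m s i x y"
proof -
  have A: "\<And>y. y \<in> IAf m s i \<Longrightarrow> (i<y \<and> y<m) \<or> (m \<le> y \<and> y < m+i) \<or> (odd s \<and> y = 2*m)"
    unfolding IAf_def using memA by blast
  have B: "\<And>y. y \<in> IBf m i \<Longrightarrow> (m+i < y \<and> y < 2*m) \<or> y < i"
    unfolding IBf_def using memB by blast
  consider "e = {i, m+i}" | x where "x \<in> IAf m s i" "e = {i,x}" | x where "x \<in> IBf m i" "e = {m+i,x}"
    using e unfolding DSIf_def by blast
  then show "\<exists>x y. e = {x,y} \<and> Rrel m s i x y"
  proof cases
    case 1
    have "Rrel m s i i (m+i)" unfolding Rrel_def by (intro disjI1) simp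
    then show ?thesis using 1 by blast
  next
    case (2 x)
    have "Rrel m s i i x" unfolding Rrel_def using A[of x] 2(1) by (intro disjI2 disjI1) simp
    then show ?thesis using 2 by blast
  next
    case (3 x)
    have "Rrel m s i (m+i) x" unfolding Rrel_def using B[of x] 3(1) by (intro disjI2) simp
    then show ?thesis using 3 by blast
  qed
qed

lemma DSIf_disj:
  assumes pq: "p < q" "q < m"
  shows "DSIf m s p \<inter> DSIf m s q = {}"
proof (rule ccontr)
  assume "DSIf m s p \<inter> DSIf m s q \<noteq> {}"
  then obtain e where e1: "e \<in> DSIf m s p" and e2: "e \<in> DSIf m s q" by blast
  obtain x y where xy: "e = {x,y}" "Rrel m s p x y" using DSI_mem[OF e1] by blast
  obtain x' y' where xy': "e = {x',y'}" "Rrel m s q x' y'" using DSI_mem[OF e2] by blast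
  have "{x,y} = {x',y'}" using xy(1) xy'(1) by simp
  then have "(x = x' \<and> y = y') \<or> (x = y' \<and> y = x')" unfolding doubleton_eq_iff .
  then show False
  proof
    assume "x = x' \<and> y = y'"
    then show False using Rdisj(1)[OF pq xy(2)] xy'(2) by simp
  next
    assume "x = y' \<and> y = x'"
    then show False using Rdisj(2)[OF pq xy(2)] xy'(2) by simp
  qed
qed

lemma idx:
  fixes i m s :: nat
  assumes i: "i < m" and sm: "2*m \<le> s" "s \<le> 2*m+1" "even s \<Longrightarrow> s = 2*m" "odd s \<Longrightarrow> 2*m < s"
  shows "IAf m s i \<subseteq> {0..<s} \<and> IBf m i \<subseteq> {0..<s} \<and> i \<notin> IAf m s i \<and> i \<notin> IBf m i \<and>
      m+i \<notin> IAf m s i \<and> m+i \<notin> IBf m i \<and> IAf m s i \<inter> IBf m i = {} \<and>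
      {i, m+i} \<union> IAf m s i \<union> IBf m i = {0..<s} \<and> i < s \<and> m+i < s"
proof -
  have A: "\<And>y. y \<in> IAf m s i \<longleftrightarrow> (i<y \<and> y<m) \<or> (m \<le> y \<and> y < m+i) \<or> (odd s \<and> y = 2*m)"
    unfolding IAf_def by (rule memA)
  have B: "\<And>y. y \<in> IBf m i \<longleftrightarrow> (m+i < y \<and> y < 2*m) \<or> y < i"
    unfolding IBf_def by (rule memB)
  have a: "IAf m s i \<subseteq> {0..<s}"
  proof
    fix y assume "y \<in> IAf m s i"
    then have "(i<y \<and> y<m) \<or> (m \<le> y \<and> y < m+i) \<or> (odd s \<and> y = 2*m)" using A by blast
    then show "y \<in> {0..<s}" using i sm(1,4) by auto
  qed
  have b: "IBf m i \<subseteq> {0..<s}"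
  proof
    fix y assume "y \<in> IBf m i"
    then have "(m+i < y \<and> y < 2*m) \<or> y < i" using B by blast
    then show "y \<in> {0..<s}" using i sm(1) by auto
  qed
  have c: "i \<notin> IAf m s i \<and> i \<notin> IBf m i \<and> m+i \<notin> IAf m s i \<and> m+i \<notin> IBf m i"
    unfolding A B using i by simp
  have d: "IAf m s i \<inter> IBf m i = {}"
  proof (rule ccontr)
    assume "IAf m s i \<inter> IBf m i \<noteq> {}"
    then obtain y where "y \<in> IAf m s i" "y \<in> IBf m i" by blast
    then have "(i<y \<and> y<m) \<or> (m \<le> y \<and> y < m+i) \<or> (odd s \<and> y = 2*m)" "(m+i < y \<and> y < 2*m) \<or> y < i"
      using A B by blast+
    then show False using i by (elim disjE conjE) linarith+
  qed
  have e: "{0..<s} \<subseteq> {i, m+i} \<union> IAf m s i \<union> IBf m i"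
  proof
    fix x assume x: "x \<in> {0..<s}"
    have "x = i \<or> x = m+i \<or> (i<x \<and> x<m) \<or> (m \<le> x \<and> x < m+i) \<or> (odd s \<and> x = 2*m) \<or>
          (m+i < x \<and> x < 2*m) \<or> x < i"
    proof (cases "x < 2*m")
      case True
      then show ?thesis using i by (cases "x < i"; cases "x = i"; cases "x < m"; cases "x < m+i"; cases "x = m+i") simp_all
    next
      case False
      then have "x = 2*m" using x sm(2) by auto
      moreover have "odd s" using x sm(3) \<open>x = 2*m\<close> by auto
      ultimately show ?thesis by simp
    qed
    then show "x \<in> {i, m+i} \<union> IAf m s i \<union> IBf m i" using A B by blast
  qed
  have f: "{i, m+i} \<union> IAf m s i \<union> IBf m i \<subseteq> {0..<s}" using a b i sm(1) by auto
  have g: "i < s" "m+i < s" using i sm(1) by auto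
  show ?thesis using a b c d e f g by blast
qed

theorem theorem2p6:
  fixes n s :: nat and S :: "nat set"
  assumes "S \<subseteq> {0..<n}" and "card S = s" and "s \<ge> 2"
  shows "\<exists>T. completely_independent {0..<n} (complete_graph_edges {0..<n}) S
               (n - nat \<lceil>real s / 2\<rceil>) T"
proof -
  have fin: "finite S" using assms(2,3) by (metis card.infinite not_numeral_le_zero)
  define L where "L = sorted_list_of_set S"
  have Ld: "distinct L" "set L = S" "length L = s" using fin assms(2) by (auto simp: L_def)
  define g where "g = (\<lambda>i. L ! i)"
  have ginj: "\<And>x y. x < s \<Longrightarrow> y < s \<Longrightarrow> g x = g y \<longleftrightarrow> x = y"
    using Ld by (simp add: g_def nth_eq_iff_index_eq)
  have inj: "inj_on g {0..<s}" using ginj by (auto simp: inj_on_def)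
  have gS: "g ` {0..<s} = S" using Ld by (auto simp: g_def set_conv_nth)
  have gin: "\<And>x. x < s \<Longrightarrow> g x \<in> S" using gS by auto
  define WL where "WL = sorted_list_of_set ({0..<n} - S)"
  have WLd: "distinct WL" "set WL = {0..<n} - S" "length WL = n - s"
    using assms(1,2) fin by (auto simp: WL_def card_Diff_subset)
  define w where "w = (\<lambda>j. WL ! j)"
  have winj: "\<And>x y. x < n - s \<Longrightarrow> y < n - s \<Longrightarrow> w x = w y \<longleftrightarrow> x = y"
    using WLd by (simp add: w_def nth_eq_iff_index_eq)
  have win: "\<And>j. j < n - s \<Longrightarrow> w j \<in> {0..<n} \<and> w j \<notin> S"
    using WLd by (metis DiffE nth_mem w_def)
  define m where "m = s div 2"
  have kk: "n - nat \<lceil>real s / 2\<rceil> = m + (n - s)"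
  proof -
    have "s \<le> n" using assms(1,2) by (metis card_atLeastLessThan card_mono diff_zero finite_atLeastLessThan)
    moreover have "m \<le> s" using m_def by simp
    ultimately show ?thesis using ceil_half[of s] m_def by simp
  qed
  have m1: "m \<ge> 1" using assms(3) m_def by simp
  have sm: "2*m \<le> s" "odd s \<Longrightarrow> 2*m < s" "s \<le> 2*m+1" "even s \<Longrightarrow> s = 2*m" using m_def assms(3) by auto
  define IA where "IA = IAf m s"
  define IB where "IB = IBf m"
  define DSI where "DSI = DSIf m s"
  define DS where "DS = (\<lambda>i. (\<lambda>e. g ` e) ` DSI i)"
  define ST where "ST = (\<lambda>v. insert {v, g 0} ((\<lambda>x. {v,x}) ` (S - {g 0})))"
  define T where "T = (\<lambda>j. if j < m then (S, DS j) else (insert (w (j-m)) S, ST (w (j-m))))"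
  define C where "C = (\<lambda>j. if j < m then {g j, g (m+j)} else {w (j-m)})"
  define V where "V = {0..<n::nat}"
  define E where "E = complete_graph_edges V"
  have DSeq: "\<And>i. DS i = insert {g i, g (m+i)} ((\<lambda>x. {g i, x}) ` (g ` IA i) \<union> (\<lambda>x. {g (m+i), x}) ` (g ` IB i))"
    by (auto simp: DS_def DSI_def DSIf_def IA_def IB_def image_image image_Un)
  have idx: "\<And>i. i < m \<Longrightarrow> IA i \<subseteq> {0..<s} \<and> IB i \<subseteq> {0..<s} \<and> i \<notin> IA i \<and> i \<notin> IB i \<and>
      m+i \<notin> IA i \<and> m+i \<notin> IB i \<and> IA i \<inter> IB i = {} \<and> {i, m+i} \<union> IA i \<union> IB i = {0..<s} \<and> i < s \<and> m+i < s"
    unfolding IA_def IB_def using idx[OF _ sm(1) sm(3) sm(4) sm(2)] by blast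
  have DSt: "\<And>i. i < m \<Longrightarrow> steiner_tree V E S (S, DS i) \<and> hubs (DS i) \<subseteq> {g i, g (m+i)} \<and> (\<forall>e\<in>DS i. e \<subseteq> S)"
  proof -
    fix i assume i: "i < m"
    note I = idx[OF i]
    have ne: "g i \<noteq> g (m+i)" using ginj I i by simp
    have n1: "g i \<notin> g ` IA i" "g i \<notin> g ` IB i" "g (m+i) \<notin> g ` IA i" "g (m+i) \<notin> g ` IB i"
      using I inj by (auto simp: inj_on_image_mem_iff)
    have n2: "g ` IA i \<inter> g ` IB i = {}"
      using I inj by (metis image_empty inj_on_image_Int)
    have VT: "S = {g i, g (m+i)} \<union> g ` IA i \<union> g ` IB i"
    proof -
      have "g ` ({i, m+i} \<union> IA i \<union> IB i) = S" using I gS by simp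
      then show ?thesis by (simp add: image_Un)
    qed
    note D = double_star[OF ne n1(1) n1(2) n1(3) n1(4) n2 DSeq[of i] VT]
    have "is_subtree V E S (DS i)"
      unfolding is_subtree_def using D assms(1) cge_mono[OF assms(1)] fin gin I
      by (auto simp: V_def E_def)
    moreover have "leaves S (DS i) \<subseteq> S" by (auto simp: leaves_def)
    ultimately show "?thesis i" using D by (auto simp: steiner_tree_def)
  qed
  have STt: "\<And>j. j < n - s \<Longrightarrow> steiner_tree V E S (insert (w j) S, ST (w j)) \<and> hubs (ST (w j)) \<subseteq> {w j}
        \<and> (\<forall>e\<in>ST (w j). w j \<in> e \<and> e \<subseteq> insert (w j) S)"
  proof -
    fix j assume j: "j < n - s"
    have wj: "w j \<in> {0..<n}" "w j \<notin> S" using win[OF j] by auto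
    have g0: "g 0 \<in> S" "g 1 \<in> S" "g 0 \<noteq> g 1" using gin ginj assms(3) by auto
    have ne: "w j \<noteq> g 0" using wj g0 by auto
    have VT: "insert (w j) S = {w j, g 0} \<union> (S - {g 0}) \<union> {}" using g0 by auto
    have ET: "ST (w j) = insert {w j, g 0} ((\<lambda>x. {w j, x}) ` (S - {g 0}) \<union> (\<lambda>x. {g 0, x}) ` {})"
      by (simp add: ST_def)
    have pr: "w j \<notin> S - {g 0}" "w j \<notin> {}" "g 0 \<notin> S - {g 0}" "g 0 \<notin> {}" "(S - {g 0}) \<inter> {} = {}"
      using wj by auto
    note D = double_star[OF ne pr ET VT]
    have H: "hubs (ST (w j)) \<subseteq> {w j}" using D(3) by simp
    have fST: "finite (ST (w j))" using fin by (simp add: ST_def)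
    have "{{w j, g 0}, {w j, g 1}} \<subseteq> {e \<in> ST (w j). w j \<in> e}" using g0 by (auto simp: ST_def)
    then have "card {{w j, g 0}, {w j, g 1}} \<le> degree (ST (w j)) (w j)"
      unfolding degree_def using fST by (intro card_mono) auto
    moreover have "card {{w j, g 0}, {w j, g 1}} = 2" using g0 ne wj by (auto simp: doubleton_eq_iff)
    ultimately have deg: "degree (ST (w j)) (w j) \<noteq> 1" by simp
    have "is_subtree V E (insert (w j) S) (ST (w j))"
      unfolding is_subtree_def using D wj assms(1) cge_mono[of "insert (w j) S" V] fin
      by (auto simp: V_def E_def)
    moreover have "leaves (insert (w j) S) (ST (w j)) \<subseteq> S" using deg by (auto simp: leaves_def)
    moreover have "\<forall>e\<in>ST (w j). w j \<in> e \<and> e \<subseteq> insert (w j) S" using g0 by (auto simp: ST_def)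
    ultimately show "?thesis j" using H by (auto simp: steiner_tree_def)
  qed
  have DSIdisj: "\<And>p q. p < q \<Longrightarrow> q < m \<Longrightarrow> DSI p \<inter> DSI q = {}"
    unfolding DSI_def using DSIf_disj by blast
  have DSIsub: "\<And>i e. i < m \<Longrightarrow> e \<in> DSI i \<Longrightarrow> e \<subseteq> {0..<s}"
    using idx unfolding DSI_def DSIf_def IA_def IB_def by blast
  have DSdisj: "\<And>p q. p < q \<Longrightarrow> q < m \<Longrightarrow> DS p \<inter> DS q = {}"
  proof (rule ccontr)
    fix p q assume pq: "p < q" "q < m" "DS p \<inter> DS q \<noteq> {}"
    then obtain e1 e2 where e: "e1 \<in> DSI p" "e2 \<in> DSI q" "g ` e1 = g ` e2" unfolding DS_def by blast
    have "e1 = e2" using inj_on_image_eq_iff[OF inj DSIsub[of p e1] DSIsub[of q e2]] e pq by simp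
    then show False using DSIdisj[OF pq(1,2)] e by blast
  qed
  show ?thesis
  proof (intro exI[of _ T])
    show "completely_independent {0..<n} (complete_graph_edges {0..<n}) S (n - nat \<lceil>real s / 2\<rceil>) T"
      unfolding completely_independent_def kk V_def[symmetric] E_def[symmetric]
    proof (intro conjI allI impI ballI)
      fix i assume "i < m + (n - s)"
      then show "steiner_tree V E S (T i)" using DSt STt by (auto simp: T_def)
    next
      fix p q assume pq: "p < q \<and> q < m + (n - s)"
      have hub: "\<And>j. j < m + (n - s) \<Longrightarrow> hubs (snd (T j)) \<subseteq> C j"
        using DSt STt by (auto simp: T_def C_def)
      have Cd: "C p \<inter> C q = {}"
      proof (cases "q < m")
        case True
        then show ?thesis using pq ginj[of p q] ginj[of p "m+q"] ginj[of "m+p" q] ginj[of "m+p" "m+q"] sm(1)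
          by (auto simp: C_def)
      next
        case False
        show ?thesis
        proof (cases "p < m")
          case True
          have "q - m < n - s" using pq False by linarith
          then have "w (q-m) \<notin> S" using win by blast
          then show ?thesis using True False gin[of p] gin[of "m+p"] sm(1) by (auto simp: C_def)
        next
          case False': False
          have "p - m < n - s" "q - m < n - s" "p - m \<noteq> q - m" using False False' pq by linarith+
          then have "w (p-m) \<noteq> w (q-m)" using winj by blast
          then show ?thesis using False False' by (simp add: C_def)
        qed
      qed
      show "snd (T p) \<inter> snd (T q) = {}"
      proof (cases "q < m")
        case True then show ?thesis using DSdisj pq by (auto simp: T_def)
      next
        case False
        have qm: "q - m < n - s" using False pq by linarith
        note Q = STt[OF qm]
        have wq: "w (q-m) \<notin> S" using win[OF qm] by blast
        show ?thesis
        proof (cases "p < m")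
          case True
          have "\<forall>e\<in>DS p. e \<subseteq> S" using DSt[OF True] by blast
          moreover have "\<forall>e\<in>ST (w (q-m)). w (q-m) \<in> e" using Q by blast
          ultimately have "DS p \<inter> ST (w (q-m)) = {}" using wq by blast
          then show ?thesis using True False by (simp add: T_def)
        next
          case False': False
          have pm: "p - m < n - s" "p - m \<noteq> q - m" using False False' pq by linarith+
          note P = STt[OF pm(1)]
          have ne: "w (p - m) \<noteq> w (q - m)" using winj pm qm by blast
          have wp: "w (p-m) \<notin> S" using win[OF pm(1)] by blast
          have "\<forall>e\<in>ST (w (p-m)). w (p-m) \<in> e" using P by blast
          moreover have "\<forall>e\<in>ST (w (q-m)). e \<subseteq> insert (w (q-m)) S" using Q by blast
          ultimately have "ST (w (p-m)) \<inter> ST (w (q-m)) = {}" using ne wp by blast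
          then show ?thesis using False False' by (simp add: T_def)
        qed
      qed
      show "fst (T p) \<inter> fst (T q) = S"
      proof (cases "q < m")
        case True then show ?thesis using pq by (simp add: T_def)
      next
        case False
        have qm: "q - m < n - s" using False pq by linarith
        have wq: "w (q-m) \<notin> S" using win[OF qm] by blast
        show ?thesis
        proof (cases "p < m")
          case True then show ?thesis using False by (auto simp: T_def)
        next
          case False': False
          have pm: "p - m < n - s" "p - m \<noteq> q - m" using False False' pq by linarith+
          have ne: "w (p - m) \<noteq> w (q - m)" using winj pm qm by blast
          have wp: "w (p-m) \<notin> S" using win[OF pm(1)] by blast
          show ?thesis using False False' ne wp wq by (auto simp: T_def)
        qed
      qed
      fix x1 x2 P Q assume "x1 \<in> S" "x2 \<in> S"
        and h: "is_path (snd (T p)) P x1 x2 \<and> set P \<subseteq> fst (T p) \<and> is_path (snd (T q)) Q x1 x2 \<and> set Q \<subseteq> fst (T q)"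
      show "internal_vertices P \<inter> internal_vertices Q = {}"
      proof -
        have "internal_vertices P \<subseteq> C p" using internal_sub_hubs[of "snd (T p)" P] h hub[of p] pq by auto
        moreover have "internal_vertices Q \<subseteq> C q" using internal_sub_hubs[of "snd (T q)" Q] h hub[of q] pq by auto
        ultimately show "internal_vertices P \<inter> internal_vertices Q = {}" using Cd by blast
      qed
    qed
  qed
qed
end
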